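(* Let $(\mathbf F,\prec)$ be an IS-family over a finite set $V$ and let $x\ge0$ be an integer. Then $\bigcup_{S\in\mathbf{Pr}_x}S=\bigcup_{S\in\mathbf E_x}S$.
   Context: Let $V$ be a finite set, $n=|V|$, $\mathbf F$ a family of subsets of $V$ and $\prec$ a strict partial order on $\mathbf F$; $S\preceq S'$ means $S\prec S'$ or $S=S'$. For $S\in\mathbf F$ and $v\in V$, $S$ covers $v$ if there is $S'\in\mathbf F$ with $S'\prec S$ and $v\in S'\setminus S$. $Pred(S)$ is the set of $S'\in\mathbf F$ with $S'\prec S$ such that there is no $S''\in\mathbf F$ with $S'\prec S''\prec S$. The visible set $Vis(S)$ is the set of $v\in V$ such that $v\in S'$ for some $S'\in Pred(S)$ and $v$ is not covered by any element of $Pred(S)$. For $S\in\mathbf F$ and $v\in S$, a witness of $v$ w.r.t. $S$ is a $\prec$-minimal element $S'\in\mathbf F$ with $S\prec S'$ and $v\in S\setminus S'$. $(\mathbf F,\prec)$ is an IS-family if: (SE) there is a unique element $sm(\mathbf F)\in\mathbf F$ with $sm(\mathbf F)\prec S$ for every other $S\in\mathbf F$; (SM) $S_1\prec S_2$ implies $|S_1|<|S_2|$; (SW) for every $S\in\mathbf F$ and $v\in S$ there is at most one witness of $v$ w.r.t. $S$; (TE) if $S_1\prec S_2\prec S_3$ are in $\mathbf F$ and $v\in S_1\setminus S_2$ then $v\in S_1\setminus S_3$; (LVS) for every $S\in\mathbf F$ and $S'\in Pred(S)$, $|S'|\le |Vis(S)|$; (DVS) for every $S\in\mathbf F$ with $S\ne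 sm(\mathbf F)$, $Vis(S)$ is not a subset of $S$; (EC) $sm(\mathbf F)$ can be computed in $O(n^3)$ time, for given $S\in\mathbf F$ and $v\in S$ the witness of $v$ w.r.t. $S$ can be computed (or its nonexistence reported) in $O(n^3)$ time, and $S_1\prec S_2$ can be tested in $O(|S_1|)$ time. Notation: $hat(S)=S\setminus\bigcup_{S'\prec S}S'$; $ex(S)=|S|-|sm(\mathbf F)|$; $\mathbf E_x=\{S\in\mathbf F: ex(S)\le x\}$; $S\in\mathbf F$ is principal if $hat(S)\ne\emptyset$; $\mathbf{Pr}_x$ is the family of all principal sets $S\in\mathbf F$ with $ex(S)\le x$. *)

theory Defs
  imports Main
begin

text \<open>A family F of subsets of V with a strict partial order prec on F.
  prec A B is read as A strictly precedes B.\<close>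

definition covers :: "'a set set \<Rightarrow> ('a set \<Rightarrow> 'a set \<Rightarrow> bool) \<Rightarrow> 'a set \<Rightarrow> 'a \<Rightarrow> bool" where
  "covers F prec S v \<longleftrightarrow> (\<exists>S'\<in>F. prec S' S \<and> v \<in> S' - S)"

definition Pred :: "'a set set \<Rightarrow> ('a set \<Rightarrow> 'a set \<Rightarrow> bool) \<Rightarrow> 'a set \<Rightarrow> 'a set set" where
  "Pred F prec S = {S'\<in>F. prec S' S \<and> \<not> (\<exists>S''\<in>F. prec S' S'' \<and> prec S'' S)}"

definition Vis :: "'a set set \<Rightarrow> ('a set \<Rightarrow> 'a set \<Rightarrow> bool) \<Rightarrow> 'a set \<Rightarrow> 'a set" where
  "Vis F prec S = {v. (\<exists>S'\<in>Pred F prec S. v \<in> S') \<and> \<not> (\<exists>S'\<in>Pred F prec S. covers F prec S' v)}"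

definition is_witness :: "'a set set \<Rightarrow> ('a set \<Rightarrow> 'a set \<Rightarrow> bool) \<Rightarrow> 'a set \<Rightarrow> 'a \<Rightarrow> 'a set \<Rightarrow> bool" where
  "is_witness F prec S v S' \<longleftrightarrow>
     S' \<in> F \<and> prec S S' \<and> v \<in> S - S' \<and>
     \<not> (\<exists>S''\<in>F. prec S S'' \<and> v \<in> S - S'' \<and> prec S'' S')"

definition sm :: "'a set set \<Rightarrow> ('a set \<Rightarrow> 'a set \<Rightarrow> bool) \<Rightarrow> 'a set" where
  "sm F prec = (THE s. s \<in> F \<and> (\<forall>S\<in>F. S \<noteq> s \<longrightarrow> prec s S))"

definition hat :: "'a set set \<Rightarrow> ('a set \<Rightarrow> 'a set \<Rightarrow> bool) \<Rightarrow> 'a set \<Rightarrow> 'a set" where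
  "hat F prec S = S - \<Union>{S'\<in>F. prec S' S}"

definition ex :: "'a set set \<Rightarrow> ('a set \<Rightarrow> 'a set \<Rightarrow> bool) \<Rightarrow> 'a set \<Rightarrow> int" where
  "ex F prec S = int (card S) - int (card (sm F prec))"

definition E_fam :: "'a set set \<Rightarrow> ('a set \<Rightarrow> 'a set \<Rightarrow> bool) \<Rightarrow> int \<Rightarrow> 'a set set" where
  "E_fam F prec x = {S\<in>F. ex F prec S \<le> x}"

definition principal :: "'a set set \<Rightarrow> ('a set \<Rightarrow> 'a set \<Rightarrow> bool) \<Rightarrow> 'a set \<Rightarrow> bool" where
  "principal F prec S \<longleftrightarrow> hat F prec S \<noteq> {}"

definition Pr_fam :: "'a set set \<Rightarrow> ('a set \<Rightarrow> 'a set \<Rightarrow> bool) \<Rightarrow> int \<Rightarrow> 'a set set" where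
  "Pr_fam F prec x = {S\<in>F. principal F prec S \<and> ex F prec S \<le> x}"

text \<open>IS-family: all structural axioms (SE), (SM), (SW), (TE), (LVS), (DVS).
  The algorithmic axiom (EC) is a complexity requirement and is not expressible.\<close>

definition IS_family :: "'a set \<Rightarrow> 'a set set \<Rightarrow> ('a set \<Rightarrow> 'a set \<Rightarrow> bool) \<Rightarrow> bool" where
  "IS_family V F prec \<longleftrightarrow>
     finite V \<and> F \<subseteq> Pow V \<and>
     (\<forall>S\<in>F. \<not> prec S S) \<and>
     (\<forall>S1\<in>F. \<forall>S2\<in>F. \<forall>S3\<in>F. prec S1 S2 \<and> prec S2 S3 \<longrightarrow> prec S1 S3) \<and>
     (\<exists>!s. s \<in> F \<and> (\<forall>S\<in>F. S \<noteq> s \<longrightarrow> prec s S)) \<and>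
     (\<forall>S1\<in>F. \<forall>S2\<in>F. prec S1 S2 \<longrightarrow> card S1 < card S2) \<and>
     (\<forall>S\<in>F. \<forall>v\<in>S. \<forall>W1 W2. is_witness F prec S v W1 \<and> is_witness F prec S v W2 \<longrightarrow> W1 = W2) \<and>
     (\<forall>S1\<in>F. \<forall>S2\<in>F. \<forall>S3\<in>F. \<forall>v. prec S1 S2 \<and> prec S2 S3 \<and> v \<in> S1 - S2 \<longrightarrow> v \<in> S1 - S3) \<and>
     (\<forall>S\<in>F. \<forall>S'\<in>Pred F prec S. card S' \<le> card (Vis F prec S)) \<and>
     (\<forall>S\<in>F. S \<noteq> sm F prec \<longrightarrow> \<not> Vis F prec S \<subseteq> S)"

end

theory Submission
  imports Defs
begin

theorem proposition4:
  fixes V :: "'a set" and F :: "'a set set" and prec :: "'a set \<Rightarrow> 'a set \<Rightarrow> bool" and x :: int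
  assumes "IS_family V F prec" and "x \<ge> 0"
  shows "\<Union>(Pr_fam F prec x) = \<Union>(E_fam F prec x)"
proof
  show "\<Union>(Pr_fam F prec x) \<subseteq> \<Union>(E_fam F prec x)"
    unfolding Pr_fam_def E_fam_def by blast
next
  have tr: "\<And>S1 S2 S3. S1 \<in> F \<Longrightarrow> S2 \<in> F \<Longrightarrow> S3 \<in> F \<Longrightarrow> prec S1 S2 \<Longrightarrow> prec S2 S3 \<Longrightarrow> prec S1 S3"
  proof -
    have "\<forall>S1\<in>F. \<forall>S2\<in>F. \<forall>S3\<in>F. prec S1 S2 \<and> prec S2 S3 \<longrightarrow> prec S1 S3"
      using assms(1) unfolding IS_family_def by (elim conjE) assumption
    thus "\<And>S1 S2 S3. S1 \<in> F \<Longrightarrow> S2 \<in> F \<Longrightarrow> S3 \<in> F \<Longrightarrow> prec S1 S2 \<Longrightarrow> prec S2 S3 \<Longrightarrow> prec S1 S3" by blast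
  qed
  have sm: "\<And>S1 S2. S1 \<in> F \<Longrightarrow> S2 \<in> F \<Longrightarrow> prec S1 S2 \<Longrightarrow> card S1 < card S2"
  proof -
    have "\<forall>S1\<in>F. \<forall>S2\<in>F. prec S1 S2 \<longrightarrow> card S1 < card S2"
      using assms(1) unfolding IS_family_def by (elim conjE) assumption
    thus "\<And>S1 S2. S1 \<in> F \<Longrightarrow> S2 \<in> F \<Longrightarrow> prec S1 S2 \<Longrightarrow> card S1 < card S2" by blast
  qed
  show "\<Union>(E_fam F prec x) \<subseteq> \<Union>(Pr_fam F prec x)"
  proof
    fix v assume "v \<in> \<Union>(E_fam F prec x)"
    then obtain S where S: "S \<in> F" "ex F prec S \<le> x" "v \<in> S" unfolding E_fam_def by blast
    define P where "P T \<longleftrightarrow> T \<in> F \<and> (T = S \<or> prec T S) \<and> v \<in> T" for T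
    have "P S" using S unfolding P_def by blast
    then obtain T where T: "P T" and minT: "\<And>U. P U \<Longrightarrow> card T \<le> card U"
      using ex_has_least_nat[of P S card] by blast
    have TF: "T \<in> F" and TS: "T = S \<or> prec T S" and vT: "v \<in> T" using T unfolding P_def by auto
    have cardle: "card T \<le> card S" using minT[OF \<open>P S\<close>] .
    have "v \<in> hat F prec T"
    proof -
      have "\<not> (\<exists>U\<in>F. prec U T \<and> v \<in> U)"
      proof
        assume "\<exists>U\<in>F. prec U T \<and> v \<in> U"
        then obtain U where U: "U \<in> F" "prec U T" "v \<in> U" by blast
        have "prec U S" using TS
        proof
          assume "T = S" thus ?thesis using U(2) by simp
        next
          assume "prec T S" thus ?thesis using tr[OF U(1) TF S(1) U(2)] by simp
        qed
        hence "P U" using U unfolding P_def by simp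
        hence "card T \<le> card U" by (rule minT)
        moreover have "card U < card T" using sm[OF U(1) TF U(2)] .
        ultimately show False by simp
      qed
      thus ?thesis using vT unfolding hat_def by blast
    qed
    hence "principal F prec T" unfolding principal_def by blast
    moreover have "ex F prec T \<le> x" using S(2) cardle unfolding ex_def by simp
    ultimately have "T \<in> Pr_fam F prec x" using TF unfolding Pr_fam_def by blast
    thus "v \<in> \<Union>(Pr_fam F prec x)" using vT by blast
  qed
qed

end
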